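(* The forgetful functor $U\colon \mathbf{Lens}\to\mathbf{Cat}$ preserves and reflects epimorphisms: a lens $E$ is an epimorphism in $\mathbf{Lens}$ if and only if its get functor $UE$ is an epimorphism in $\mathbf{Cat}$.
   Context: $\mathbf{Cat}$ is the category of small categories and functors. A lens $F\colon \mathbf{A}\to\mathbf{B}$ between small categories consists of a functor $F\colon\mathbf{A}\to\mathbf{B}$ (the get functor) together with, for each object $A$ of $\mathbf{A}$, a function $\varphi_{F,A}$ from the set of morphisms of $\mathbf{B}$ with domain $FA$ to the set of morphisms of $\mathbf{A}$ with domain $A$, such that: $F(\varphi_{F,A}b)=b$; $\varphi_{F,A}(\mathrm{id}_{FA})=\mathrm{id}_A$; and $\varphi_{F,A}(b'\circ b)=\varphi_{F,A'}(b')\circ\varphi_{F,A}(b)$ whenever $b$ has domain $FA$, $A'$ is the codomain of $\varphi_{F,A}b$, and $b'$ has domain $FA'$. $\mathbf{Lens}$ is the category of small categories and lenses; the composite of $F\colon\mathbf{A}\to\mathbf{B}$ and $G\colon\mathbf{B}\to\mathbf{C}$ has get functor $G\circ F$ and put functions $\varphi_{G\circ F,A}(c)=\varphi_{F,A}(\varphi_{G,FA}(c))$. $U\colon\mathbf{Lens}\to\mathbf{Cat}$ is the identity-on-objects functor sending a lens to its get functor. *)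

theory Defs
  imports Main
begin

text \<open>Small categories are modelled relative to a universe type 'u: objects and
morphisms of every category considered are elements of 'u.\<close>

record 'u cat =
  c_obj  :: "'u set"
  c_arr  :: "'u set"
  c_dom  :: "'u \<Rightarrow> 'u"
  c_cod  :: "'u \<Rightarrow> 'u"
  c_id   :: "'u \<Rightarrow> 'u"
  c_comp :: "'u \<Rightarrow> 'u \<Rightarrow> 'u"  (* c_comp C g f = g \<circ> f *)

definition is_category :: "'u cat \<Rightarrow> bool" where
  "is_category C \<longleftrightarrow>
     (\<forall>f\<in>c_arr C. c_dom C f \<in> c_obj C \<and> c_cod C f \<in> c_obj C)
   \<and> (\<forall>a\<in>c_obj C. c_id C a \<in> c_arr C \<and> c_dom C (c_id C a) = a \<and> c_cod C (c_id C a) = a)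
   \<and> (\<forall>f\<in>c_arr C. \<forall>g\<in>c_arr C. c_cod C f = c_dom C g \<longrightarrow>
        c_comp C g f \<in> c_arr C \<and> c_dom C (c_comp C g f) = c_dom C f
        \<and> c_cod C (c_comp C g f) = c_cod C g)
   \<and> (\<forall>f\<in>c_arr C. c_comp C f (c_id C (c_dom C f)) = f \<and> c_comp C (c_id C (c_cod C f)) f = f)
   \<and> (\<forall>f\<in>c_arr C. \<forall>g\<in>c_arr C. \<forall>h\<in>c_arr C.
        c_cod C f = c_dom C g \<longrightarrow> c_cod C g = c_dom C h \<longrightarrow>
        c_comp C h (c_comp C g f) = c_comp C (c_comp C h g) f)"

record 'u ftor =
  fobj :: "'u \<Rightarrow> 'u"
  farr :: "'u \<Rightarrow> 'u"

definition is_functor :: "'u cat \<Rightarrow> 'u cat \<Rightarrow> 'u ftor \<Rightarrow> bool" where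
  "is_functor A B F \<longleftrightarrow>
     (\<forall>a\<in>c_obj A. fobj F a \<in> c_obj B)
   \<and> (\<forall>f\<in>c_arr A. farr F f \<in> c_arr B \<and> c_dom B (farr F f) = fobj F (c_dom A f)
        \<and> c_cod B (farr F f) = fobj F (c_cod A f))
   \<and> (\<forall>a\<in>c_obj A. farr F (c_id A a) = c_id B (fobj F a))
   \<and> (\<forall>f\<in>c_arr A. \<forall>g\<in>c_arr A. c_cod A f = c_dom A g \<longrightarrow>
        farr F (c_comp A g f) = c_comp B (farr F g) (farr F f))"

definition ftor_eq :: "'u cat \<Rightarrow> 'u ftor \<Rightarrow> 'u ftor \<Rightarrow> bool" where
  "ftor_eq A F G \<longleftrightarrow> (\<forall>a\<in>c_obj A. fobj F a = fobj G a) \<and> (\<forall>f\<in>c_arr A. farr F f = farr G f)"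

definition ftor_comp :: "'u ftor \<Rightarrow> 'u ftor \<Rightarrow> 'u ftor" where
  "ftor_comp G F = \<lparr>fobj = fobj G \<circ> fobj F, farr = farr G \<circ> farr F\<rparr>"

text \<open>A lens: get functor plus put functions; put L a b is the lift of b at object a.\<close>
record 'u lens =
  get :: "'u ftor"
  put :: "'u \<Rightarrow> 'u \<Rightarrow> 'u"

definition is_lens :: "'u cat \<Rightarrow> 'u cat \<Rightarrow> 'u lens \<Rightarrow> bool" where
  "is_lens A B L \<longleftrightarrow>
     is_functor A B (get L)
   \<and> (\<forall>a\<in>c_obj A. \<forall>b\<in>c_arr B. c_dom B b = fobj (get L) a \<longrightarrow>
        put L a b \<in> c_arr A \<and> c_dom A (put L a b) = a \<and> farr (get L) (put L a b) = b)
   \<and> (\<forall>a\<in>c_obj A. put L a (c_id B (fobj (get L) a)) = c_id A a)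
   \<and> (\<forall>a\<in>c_obj A. \<forall>b\<in>c_arr B. \<forall>b'\<in>c_arr B.
        c_dom B b = fobj (get L) a \<longrightarrow> c_dom B b' = fobj (get L) (c_cod A (put L a b)) \<longrightarrow>
        put L a (c_comp B b' b) = c_comp A (put L (c_cod A (put L a b)) b') (put L a b))"

definition lens_eq :: "'u cat \<Rightarrow> 'u cat \<Rightarrow> 'u lens \<Rightarrow> 'u lens \<Rightarrow> bool" where
  "lens_eq A B L M \<longleftrightarrow> ftor_eq A (get L) (get M)
     \<and> (\<forall>a\<in>c_obj A. \<forall>b\<in>c_arr B. c_dom B b = fobj (get L) a \<longrightarrow> put L a b = put M a b)"

definition lens_comp :: "'u lens \<Rightarrow> 'u lens \<Rightarrow> 'u lens" where
  "lens_comp M L = \<lparr>get = ftor_comp (get M) (get L),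
                     put = (\<lambda>a c. put L a (put M (fobj (get L) a) c))\<rparr>"

definition cat_epi :: "'u cat \<Rightarrow> 'u cat \<Rightarrow> 'u ftor \<Rightarrow> bool" where
  "cat_epi A B E \<longleftrightarrow> (\<forall>(C :: 'u cat) F G. is_category C \<longrightarrow> is_functor B C F \<longrightarrow> is_functor B C G \<longrightarrow>
      ftor_eq A (ftor_comp F E) (ftor_comp G E) \<longrightarrow> ftor_eq B F G)"

definition lens_epi :: "'u cat \<Rightarrow> 'u cat \<Rightarrow> 'u lens \<Rightarrow> bool" where
  "lens_epi A B E \<longleftrightarrow> (\<forall>(C :: 'u cat) F G. is_category C \<longrightarrow> is_lens B C F \<longrightarrow> is_lens B C G \<longrightarrow>
      lens_eq A C (lens_comp F E) (lens_comp G E) \<longrightarrow> lens_eq B C F G)"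

end

theory Submission imports Defs begin

lemma enc_exists:
  assumes "infinite (UNIV :: 'u set)"
  shows "\<exists>e :: 'u \<times> bool \<Rightarrow> 'u. inj e"
proof -
  obtain f :: "'u \<times> 'u \<Rightarrow> 'u" where f: "bij_betw f (UNIV \<times> UNIV) UNIV"
    using card_of_Times_same_infinite[OF assms] card_of_ordIso by blast
  have fi: "inj f" using f by (simp add: bij_betw_def)
  obtain u0 u1 :: 'u where u: "u0 \<noteq> u1"
    using assms by (metis finite.emptyI finite_insert UNIV_eq_I insertCI)
  define g where "g b = (if b then u1 else u0)" for b
  have gi: "inj g" using u unfolding g_def inj_def by auto
  have "inj (map_prod id g)" using map_prod_inj_on[OF inj_on_id[of UNIV] gi] by simp
  then have "inj (f \<circ> map_prod id g)" using inj_compose[OF fi] by blast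
  then show ?thesis by blast
qed


definition tC :: "('u \<times> bool \<Rightarrow> 'u) \<Rightarrow> 'u cat \<Rightarrow> 'u set \<Rightarrow> 'u cat" where
 "tC e B S = \<lparr>c_obj = {e (x,True)|x. x \<in> c_obj B} \<union> {e (x,False)|x. x \<in> c_obj B \<and> x \<notin> S},
   c_arr = {e (f,True)|f. f \<in> c_arr B} \<union> {e (f,False)|f. f \<in> c_arr B \<and> c_dom B f \<notin> S},
   c_dom = (\<lambda>u. e (c_dom B (fst (inv e u)), snd (inv e u))),
   c_cod = (\<lambda>u. e (c_cod B (fst (inv e u)), snd (inv e u) \<or> c_cod B (fst (inv e u)) \<in> S)),
   c_id = (\<lambda>u. e (c_id B (fst (inv e u)), snd (inv e u))),
   c_comp = (\<lambda>v u. e (c_comp B (fst (inv e v)) (fst (inv e u)), snd (inv e u)))\<rparr>"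

definition tF :: "('u \<times> bool \<Rightarrow> 'u) \<Rightarrow> 'u cat \<Rightarrow> 'u set \<Rightarrow> 'u lens" where
 "tF e B S = \<lparr>get = \<lparr>fobj = (\<lambda>x. e (x, x \<in> S)), farr = (\<lambda>f. e (f, c_dom B f \<in> S))\<rparr>,
              put = (\<lambda>x u. fst (inv e u))\<rparr>"

definition tG :: "('u \<times> bool \<Rightarrow> 'u) \<Rightarrow> 'u lens" where
 "tG e = \<lparr>get = \<lparr>fobj = (\<lambda>x. e (x, True)), farr = (\<lambda>f. e (f, True))\<rparr>,
              put = (\<lambda>x u. fst (inv e u))\<rparr>"

locale constr =
  fixes e :: "'u \<times> bool \<Rightarrow> 'u" and B :: "'u cat" and S :: "'u set"
  assumes inj: "inj e" and cat: "is_category B"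
    and up: "\<And>f. f \<in> c_arr B \<Longrightarrow> c_dom B f \<in> S \<Longrightarrow> c_cod B f \<in> S"
begin

lemma dec[simp]: "inv e (e p) = p" using inj by (simp add: inv_f_f)
lemma einj[simp]: "(e p = e q) = (p = q)" using inj by (simp add: inj_eq)

lemma catC: "is_category (tC e B S)"
proof -
  note c = cat[unfolded is_category_def]
  show ?thesis unfolding is_category_def tC_def
    apply (intro conjI ballI impI)
    using c up by auto
qed

lemma lensF: "is_lens B (tC e B S) (tF e B S)"
proof -
  note c = cat[unfolded is_category_def]
  show ?thesis unfolding is_lens_def is_functor_def tC_def tF_def
    apply (intro conjI ballI impI)
    using c up by auto
qed

lemma lensG: "is_lens B (tC e B S) (tG e)"
proof -
  note c = cat[unfolded is_category_def]
  show ?thesis unfolding is_lens_def is_functor_def tC_def tG_def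
    apply (intro conjI ballI impI)
    using c up by auto
qed

end

lemma up_closed:
  assumes cA: "is_category A" and LE: "is_lens A B E" and fB: "f \<in> c_arr B" and fd: "c_dom B f \<in> fobj (get E) ` c_obj A"
  shows "c_cod B f \<in> fobj (get E) ` c_obj A"
proof -
  obtain a where a: "a \<in> c_obj A" "c_dom B f = fobj (get E) a" using fd by blast
  note L = LE[unfolded is_lens_def is_functor_def]
  have p: "put E a f \<in> c_arr A" "c_dom A (put E a f) = a" "farr (get E) (put E a f) = f"
    using L a fB by auto
  have "c_cod B f = fobj (get E) (c_cod A (put E a f))" using L p by metis
  moreover have "c_cod A (put E a f) \<in> c_obj A"
    using cA p unfolding is_category_def by blast
  ultimately show ?thesis by blast
qed

lemma separate:
  assumes inf: "infinite (UNIV :: 'u set)" and cA: "is_category A" and cB: "is_category B"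
    and E: "is_lens A B E" and b: "b \<in> c_obj B" "b \<notin> fobj (get E) ` c_obj A"
  shows "\<exists>(C :: 'u cat) F G. is_category C \<and> is_lens B C F \<and> is_lens B C G
     \<and> lens_eq A C (lens_comp F E) (lens_comp G E) \<and> fobj (get F) b \<noteq> fobj (get G) b"
proof -
  obtain e :: "'u \<times> bool \<Rightarrow> 'u" where inj: "inj e" using enc_exists[OF inf] by blast
  let ?S = "fobj (get E) ` c_obj A"
  interpret constr e B ?S
    using inj cB up_closed[OF cA E] by unfold_locales auto
  have dec[simp]: "inv e (e p) = p" for p by simp
  have "lens_eq A (tC e B ?S) (lens_comp (tF e B ?S) E) (lens_comp (tG e) E)"
    unfolding lens_eq_def ftor_eq_def
  proof (intro conjI ballI impI)
    fix a assume "a \<in> c_obj A"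
    then show "fobj (get (lens_comp (tF e B ?S) E)) a = fobj (get (lens_comp (tG e) E)) a"
      by (simp add: lens_comp_def ftor_comp_def tF_def tG_def)
  next
    fix f assume f: "f \<in> c_arr A"
    have "c_dom B (farr (get E) f) = fobj (get E) (c_dom A f)"
      using E f unfolding is_lens_def is_functor_def by blast
    moreover have "c_dom A f \<in> c_obj A" using cA f unfolding is_category_def by blast
    ultimately have "c_dom B (farr (get E) f) \<in> ?S" by simp
    then show "farr (get (lens_comp (tF e B ?S) E)) f = farr (get (lens_comp (tG e) E)) f"
      by (simp add: lens_comp_def ftor_comp_def tF_def tG_def)
  next
    fix a c
    show "put (lens_comp (tF e B ?S) E) a c = put (lens_comp (tG e) E) a c"
      by (simp add: lens_comp_def tF_def tG_def)
  qed
  moreover have "fobj (get (tF e B ?S)) b \<noteq> fobj (get (tG e)) b"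
    using b by (simp add: tF_def tG_def)
  ultimately show ?thesis using catC lensF lensG by blast
qed

lemma surj_epi:
  assumes cA: "is_category A" and cB: "is_category B" and E: "is_lens A B E"
    and S: "c_obj B \<subseteq> fobj (get E) ` c_obj A"
    and F: "is_functor B C F" and G: "is_functor B C G"
    and eq: "ftor_eq A (ftor_comp F (get E)) (ftor_comp G (get E))"
  shows "ftor_eq B F G"
  unfolding ftor_eq_def
proof (intro conjI ballI)
  fix b assume "b \<in> c_obj B"
  then obtain a where a: "a \<in> c_obj A" "b = fobj (get E) a" using S by blast
  have "fobj (ftor_comp F (get E)) a = fobj (ftor_comp G (get E)) a"
    using eq a(1) unfolding ftor_eq_def by blast
  then show "fobj F b = fobj G b" by (simp add: ftor_comp_def a(2))
next
  fix g assume g: "g \<in> c_arr B"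
  then have "c_dom B g \<in> c_obj B" using cB unfolding is_category_def by blast
  then obtain a where a: "a \<in> c_obj A" "c_dom B g = fobj (get E) a" using S by blast
  have p: "put E a g \<in> c_arr A" "farr (get E) (put E a g) = g"
    using E a g unfolding is_lens_def by auto
  have "farr (ftor_comp F (get E)) (put E a g) = farr (ftor_comp G (get E)) (put E a g)"
    using eq p(1) unfolding ftor_eq_def by blast
  then show "farr F g = farr G g" by (simp add: ftor_comp_def p(2))
qed

theorem theorem3p6:
  fixes A B :: "'u cat" and E :: "'u lens"
  assumes "infinite (UNIV :: 'u set)"
    and "is_category A" and "is_category B" and "is_lens A B E"
  shows "lens_epi A B E \<longleftrightarrow> cat_epi A B (get E)"
proof (cases "c_obj B \<subseteq> fobj (get E) ` c_obj A")
  case False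
  then obtain b where b: "b \<in> c_obj B" "b \<notin> fobj (get E) ` c_obj A" by blast
  obtain C F G where C: "is_category C" "is_lens B C F" "is_lens B C G"
     "lens_eq A C (lens_comp F E) (lens_comp G E)" "fobj (get F) b \<noteq> fobj (get G) b"
    using separate[OF assms b] by blast
  have "\<not> lens_epi A B E"
  proof
    assume "lens_epi A B E"
    then have "lens_eq B C F G" using C(1-4) unfolding lens_epi_def by blast
    then show False using C(5) b unfolding lens_eq_def ftor_eq_def by blast
  qed
  moreover have "\<not> cat_epi A B (get E)"
  proof
    assume ce: "cat_epi A B (get E)"
    have "ftor_eq A (ftor_comp (get F) (get E)) (ftor_comp (get G) (get E))"
      using C(4) by (simp add: lens_eq_def lens_comp_def)
    moreover have "is_functor B C (get F)" "is_functor B C (get G)"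
      using C unfolding is_lens_def by auto
    ultimately have "ftor_eq B (get F) (get G)" using ce[unfolded cat_epi_def] C(1) by blast
    then show False using C(5) b unfolding ftor_eq_def by blast
  qed
  ultimately show ?thesis by blast
next
  case True
  have ce: "cat_epi A B (get E)"
    unfolding cat_epi_def using surj_epi[OF assms(2-4) True] by blast
  have le: "lens_epi A B E"
    unfolding lens_epi_def
  proof (intro allI impI)
    fix C F G
    assume cC: "is_category C" and F: "is_lens B C F" and G: "is_lens B C G"
      and eq: "lens_eq A C (lens_comp F E) (lens_comp G E)"
    have fe: "ftor_eq B (get F) (get G)"
      apply (rule surj_epi[OF assms(2-4) True])
      using F G eq by (auto simp: is_lens_def lens_eq_def lens_comp_def)
    show "lens_eq B C F G" unfolding lens_eq_def
    proof (intro conjI fe ballI impI)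
      fix b c assume b: "b \<in> c_obj B" and c: "c \<in> c_arr C" and dc: "c_dom C c = fobj (get F) b"
      obtain a where a: "a \<in> c_obj A" "b = fobj (get E) a" using True b by blast
      have dG: "c_dom C c = fobj (get G) b" using fe b dc unfolding ftor_eq_def by auto
      have "put E a (put F (fobj (get E) a) c) = put E a (put G (fobj (get E) a) c)"
        using eq a c dc unfolding lens_eq_def lens_comp_def ftor_comp_def by auto
      moreover have "farr (get E) (put E a (put F (fobj (get E) a) c)) = put F b c"
        using assms(4) F a b c dc unfolding is_lens_def by auto
      moreover have "farr (get E) (put E a (put G (fobj (get E) a) c)) = put G b c"
        using assms(4) G a b c dG unfolding is_lens_def by auto
      ultimately show "put F b c = put G b c" by metis
    qed
  qed
  show ?thesis using ce le by blast
qed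

end
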